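(* Let $\alpha>1$, $\gamma,a\in\mathbb R$, $d\in\mathbb N$, and assume $d+\gamma<\alpha d$ if $a=0$ and $d+\gamma<\alpha(d-2)$ if $a\ne0$. Let $F_\alpha$ satisfy $F_\alpha(z)=z^\alpha$ for $z\ge0$. Let $u\ge0$ be a nonnegative weak solution of (HH) on $[0,T)$ with initial datum $u_0\in L^1_{loc}(\mathbb R^d)$. Let $\phi\in C_c^\infty(\mathbb R^d,[0,1])$ with $\phi=1$ on $\{|x|\le1/2\}$ and $\operatorname{supp}\phi\subset\{|x|\le1\}$. Then for every $l\ge\max\left(3,\frac{2\alpha}{\alpha-1}\right)$, $$\int_{|x|<\sqrt T}u_0(x)\,\phi^l\!\left(\frac x{\sqrt T}\right)dx\le C\,T^{-\frac{2+\gamma}{2(\alpha-1)}+\frac d2},$$ where $C$ is independent of $T$ and $u$.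
   Context: (HH): $\partial_tu-\Delta u+a|x|^{-2}u=|x|^\gamma F_\alpha(u)$, $u(0)=u_0$. Weak solution: $u\in L^\alpha\big((0,T);(L^\alpha_{\gamma/\alpha})_{loc}(\mathbb R^d)\big)$ (i.e. $|x|^{\gamma/\alpha}u\in L^\alpha$ on $(0,T)\times K$ for every compact $K$) such that for all $T'\in[0,T]$ and all $\eta\in C^{1,2}([0,T]\times\mathbb R^d)$ with $\eta(t,\cdot)$ compactly supported, $\int u(T',x)\eta(T',x)dx-\int u_0(x)\eta(0,x)dx=\int_{[0,T']\times\mathbb R^d}\big[u(\partial_t\eta+\Delta\eta-a|x|^{-2}\eta)+|x|^\gamma F_\alpha(u)\eta\big]dx\,dt.$ *)

theory Defs
  imports "HOL-Analysis.Analysis"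
begin

coinductive smooth_fun :: "('a::euclidean_space \<Rightarrow> real) \<Rightarrow> bool" where
  "(\<And>x. f differentiable (at x)) \<Longrightarrow>
   (\<And>v. smooth_fun (\<lambda>x. frechet_derivative f (at x) v)) \<Longrightarrow> smooth_fun f"

definition L1_loc :: "('a::euclidean_space \<Rightarrow> real) \<Rightarrow> bool" where
  "L1_loc f \<longleftrightarrow> f \<in> borel_measurable lborel \<and>
     (\<forall>K. compact K \<longrightarrow> set_integrable lborel K f)"

definition C12_with ::
  "real \<Rightarrow> (real \<Rightarrow> 'a::euclidean_space \<Rightarrow> real) \<Rightarrow> (real \<Rightarrow> 'a \<Rightarrow> real)
   \<Rightarrow> (real \<Rightarrow> 'a \<Rightarrow> 'a \<Rightarrow> real) \<Rightarrow> (real \<Rightarrow> 'a \<Rightarrow> 'a \<Rightarrow> 'a \<Rightarrow> real) \<Rightarrow> bool" where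
  "C12_with T \<eta> \<eta>t Dx Dxx \<longleftrightarrow>
     (\<forall>t\<in>{0..T}. \<forall>x. ((\<lambda>s. \<eta> s x) has_real_derivative \<eta>t t x) (at t within {0..T}))
   \<and> (\<forall>t\<in>{0..T}. \<forall>x. (\<eta> t has_derivative Dx t x) (at x))
   \<and> (\<forall>t\<in>{0..T}. \<forall>x v. ((\<lambda>y. Dx t y v) has_derivative Dxx t x v) (at x))
   \<and> continuous_on ({0..T} \<times> UNIV) (\<lambda>(t,x). \<eta> t x)
   \<and> continuous_on ({0..T} \<times> UNIV) (\<lambda>(t,x). \<eta>t t x)
   \<and> (\<forall>v. continuous_on ({0..T} \<times> UNIV) (\<lambda>(t,x). Dx t x v))
   \<and> (\<forall>v w. continuous_on ({0..T} \<times> UNIV) (\<lambda>(t,x). Dxx t x v w))"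

definition laplacian_of :: "('a::euclidean_space \<Rightarrow> 'a \<Rightarrow> real) \<Rightarrow> real" where
  "laplacian_of H = (\<Sum>b\<in>Basis. H b b)"

definition weak_solution ::
  "real \<Rightarrow> real \<Rightarrow> real \<Rightarrow> (real \<Rightarrow> real) \<Rightarrow> ('a::euclidean_space \<Rightarrow> real) \<Rightarrow> real
   \<Rightarrow> (real \<Rightarrow> 'a \<Rightarrow> real) \<Rightarrow> bool" where
  "weak_solution a \<gamma> \<alpha> F u0 T u \<longleftrightarrow>
     (\<lambda>z. indicator ({0<..<T} \<times> UNIV) z * u (fst z) (snd z)) \<in> borel_measurable (lborel \<Otimes>\<^sub>M lborel)
   \<and> (\<forall>K. compact K \<longrightarrow>
        (\<integral>\<^sup>+z\<in>{0<..<T} \<times> K. ennreal ((norm (snd z) powr (\<gamma>/\<alpha>) * \<bar>u (fst z) (snd z)\<bar>) powr \<alpha>)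
           \<partial>(lborel \<Otimes>\<^sub>M lborel)) < \<infinity>)
   \<and> (\<forall>T'\<in>{0..<T}. \<forall>\<eta> \<eta>t Dx Dxx.
        C12_with T \<eta> \<eta>t Dx Dxx \<and> (\<forall>t\<in>{0..T}. \<exists>K. compact K \<and> (\<forall>x. x \<notin> K \<longrightarrow> \<eta> t x = 0))
        \<longrightarrow>
        (let G = (\<lambda>z. u (fst z) (snd z) *
                    (\<eta>t (fst z) (snd z) + laplacian_of (Dxx (fst z) (snd z))
                     - a * norm (snd z) powr (-2) * \<eta> (fst z) (snd z))
                   + norm (snd z) powr \<gamma> * F (u (fst z) (snd z)) * \<eta> (fst z) (snd z))
         in integrable lborel (\<lambda>x. u T' x * \<eta> T' x)
          \<and> integrable lborel (\<lambda>x. u0 x * \<eta> 0 x)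
          \<and> set_integrable (lborel \<Otimes>\<^sub>M lborel) ({0..T'} \<times> UNIV) G
          \<and> (\<integral>x. u T' x * \<eta> T' x \<partial>lborel) - (\<integral>x. u0 x * \<eta> 0 x \<partial>lborel)
              = set_lebesgue_integral (lborel \<Otimes>\<^sub>M lborel) ({0..T'} \<times> UNIV) G))"

end

theory Submission
  imports Defs
begin


lemma cball_sets_borel[measurable]: "cball (c::'a::euclidean_space) r \<in> sets borel"
  by (simp add: borel_closed)
lemma ball_sets_borel[measurable]: "ball (c::'a::euclidean_space) r \<in> sets borel"
  by (simp add: borel_open)
lemma norm_powr_meas[measurable]: "(\<lambda>x::'a::euclidean_space. norm x powr p) \<in> borel_measurable borel"
  by measurable

lemma nn_integral_scale:
  fixes f :: "'a::euclidean_space \<Rightarrow> ennreal"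
  assumes [measurable]: "f \<in> borel_measurable borel" and c: "c > 0"
  shows "(\<integral>\<^sup>+x. f x \<partial>lborel) = ennreal (c ^ DIM('a)) * (\<integral>\<^sup>+x. f (c *\<^sub>R x) \<partial>lborel)"
proof -
  have "c \<noteq> 0" using c by simp
  show ?thesis
  by (subst lborel_affine[OF \<open>c \<noteq> 0\<close>, of 0])
     (simp add: nn_integral_density nn_integral_distr nn_integral_cmult c abs_of_pos)
qed

definition Jp :: "real \<Rightarrow> real \<Rightarrow> 'a::euclidean_space itself \<Rightarrow> ennreal" where
  "Jp p R _ = (\<integral>\<^sup>+x. indicator (cball (0::'a) R) x * ennreal (norm x powr (-p)) \<partial>lborel)"

lemma Jp_scale:
  assumes R: "R > 0"
  shows "Jp p R TYPE('a::euclidean_space) = ennreal (R powr (real DIM('a) - p)) * Jp p 1 TYPE('a)"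
proof -
  have "Jp p R TYPE('a) = ennreal (R ^ DIM('a)) *
     (\<integral>\<^sup>+x. indicator (cball (0::'a) R) (R *\<^sub>R x) * ennreal (norm (R *\<^sub>R x) powr (-p)) \<partial>lborel)"
    unfolding Jp_def by (rule nn_integral_scale[OF _ R]) measurable
  also have "(\<lambda>x::'a. indicator (cball (0::'a) R) (R *\<^sub>R x) * ennreal (norm (R *\<^sub>R x) powr (-p)))
     = (\<lambda>x. ennreal (R powr (-p)) * (indicator (cball (0::'a) 1) x * ennreal (norm x powr (-p))))"
  proof
    fix x :: 'a
    have "norm (R *\<^sub>R x) powr (-p) = R powr (-p) * norm x powr (-p)"
      using R by (simp add: powr_mult)
    moreover have "R *\<^sub>R x \<in> cball 0 R \<longleftrightarrow> x \<in> cball 0 1"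
      using R by (simp add: mult_le_cancel_left1)
    ultimately show "indicator (cball (0::'a) R) (R *\<^sub>R x) * ennreal (norm (R *\<^sub>R x) powr (-p))
       = ennreal (R powr (-p)) * (indicator (cball (0::'a) 1) x * ennreal (norm x powr (-p)))"
      by (auto simp: indicator_def ennreal_mult)
  qed
  also have "ennreal (R ^ DIM('a)) * (\<integral>\<^sup>+x. ennreal (R powr (-p)) * (indicator (cball (0::'a) 1) x * ennreal (norm x powr (-p))) \<partial>lborel)
      = ennreal (R ^ DIM('a)) * (ennreal (R powr (-p)) * Jp p 1 TYPE('a))"
    unfolding Jp_def by (subst nn_integral_cmult) auto
  also have "\<dots> = ennreal (R powr (real DIM('a) - p)) * Jp p 1 TYPE('a)"
    using R by (simp add: mult.assoc[symmetric] ennreal_mult[symmetric] powr_realpow[symmetric] powr_add[symmetric])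
  finally show ?thesis .
qed

definition shell :: "real \<Rightarrow> real \<Rightarrow> 'a::euclidean_space set" where
  "shell r R = {x. r < norm x \<and> norm x \<le> R}"

lemma shell_sets[measurable]: "shell r R \<in> sets (borel :: 'a::euclidean_space measure)"
  unfolding shell_def by measurable

definition gsh :: "real \<Rightarrow> nat \<Rightarrow> 'a::euclidean_space itself \<Rightarrow> ennreal" where
  "gsh p n _ = (\<integral>\<^sup>+x. indicator (shell ((1/2)^n) 1 :: 'a set) x * ennreal (norm x powr (-p)) \<partial>lborel)"

lemma gsh_0: "gsh p 0 TYPE('a::euclidean_space) = 0"
  unfolding gsh_def shell_def by simp

lemma gsh_Suc: "gsh p (Suc n) TYPE('a::euclidean_space) = gsh p 1 TYPE('a) + ennreal (2 powr (p - real DIM('a))) * gsh p n TYPE('a)"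
proof -
  let ?f = "\<lambda>x::'a. ennreal (norm x powr (-p))"
  have split: "indicator (shell ((1/2)^Suc n) 1 :: 'a set) x * ?f x
     = indicator (shell (1/2) 1 :: 'a set) x * ?f x + indicator (shell ((1/2)^Suc n) (1/2) :: 'a set) x * ?f x" for x
  proof -
    have "(1/2::real)^Suc n \<le> 1/2" by (simp add: power_le_one)
    then show ?thesis by (auto simp: shell_def indicator_def)
  qed
  have "gsh p (Suc n) TYPE('a) = gsh p 1 TYPE('a) + (\<integral>\<^sup>+x. indicator (shell ((1/2)^Suc n) (1/2) :: 'a set) x * ?f x \<partial>lborel)"
    unfolding gsh_def split by (subst nn_integral_add) auto
  also have "(\<integral>\<^sup>+x. indicator (shell ((1/2)^Suc n) (1/2) :: 'a set) x * ?f x \<partial>lborel)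
     = ennreal ((1/2) ^ DIM('a)) * (\<integral>\<^sup>+x. indicator (shell ((1/2)^Suc n) (1/2) :: 'a set) ((1/2) *\<^sub>R x) * ?f ((1/2) *\<^sub>R x) \<partial>lborel)"
    by (rule nn_integral_scale) auto
  also have "(\<lambda>x. indicator (shell ((1/2)^Suc n) (1/2) :: 'a set) ((1/2) *\<^sub>R x) * ?f ((1/2) *\<^sub>R x))
     = (\<lambda>x. ennreal (2 powr p) * (indicator (shell ((1/2)^n) 1 :: 'a set) x * ?f x))"
  proof
    fix x :: 'a
    have h2: "(1/2::real) powr (-p) = 2 powr p"
      by (simp add: powr_minus_divide powr_divide)
    have "norm ((1/2::real) *\<^sub>R x) powr (-p) = (1/2) powr (-p) * norm x powr (-p)"
      by (subst powr_mult[symmetric]) auto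
    then have "norm ((1/2::real) *\<^sub>R x) powr (-p) = 2 powr p * norm x powr (-p)" using h2 by simp
    moreover have "(1/2::real) *\<^sub>R x \<in> shell ((1/2)^Suc n) (1/2) \<longleftrightarrow> x \<in> shell ((1/2)^n) 1"
      by (auto simp: shell_def)
    ultimately show "indicator (shell ((1/2)^Suc n) (1/2) :: 'a set) ((1/2) *\<^sub>R x) * ?f ((1/2) *\<^sub>R x)
     = ennreal (2 powr p) * (indicator (shell ((1/2)^n) 1 :: 'a set) x * ?f x)"
      by (auto simp: indicator_def ennreal_mult)
  qed
  also have "(\<integral>\<^sup>+x. ennreal (2 powr p) * (indicator (shell ((1/2)^n) 1 :: 'a set) x * ?f x) \<partial>lborel)
      = ennreal (2 powr p) * gsh p n TYPE('a)"
    unfolding gsh_def by (subst nn_integral_cmult) auto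
  also have "ennreal ((1/2) ^ DIM('a)) * (ennreal (2 powr p) * gsh p n TYPE('a))
     = ennreal (2 powr (p - real DIM('a))) * gsh p n TYPE('a)"
    by (simp add: mult.assoc[symmetric] ennreal_mult[symmetric] powr_diff powr_realpow power_one_over divide_simps)
  finally show ?thesis .
qed

lemma gsh_1_finite: "gsh p 1 TYPE('a::euclidean_space) < \<infinity>"
proof -
  have "gsh p 1 TYPE('a) \<le> (\<integral>\<^sup>+x. ennreal (max 1 (2 powr p)) * indicator (cball (0::'a) 1) x \<partial>lborel)"
    unfolding gsh_def
  proof (rule nn_integral_mono)
    fix x :: 'a
    show "indicator (shell ((1/2)^1) 1 :: 'a set) x * ennreal (norm x powr (-p))
       \<le> ennreal (max 1 (2 powr p)) * indicator (cball (0::'a) 1) x"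
    proof (cases "x \<in> shell (1/2) 1")
      case True
      then have x: "1/2 < norm x" "norm x \<le> 1" by (auto simp: shell_def)
      have "norm x powr (-p) \<le> max 1 (2 powr p)"
      proof (cases "p \<ge> 0")
        case True
        have "norm x powr (-p) \<le> (1/2) powr (-p)"
          using x True by (intro powr_mono2') auto
        also have "\<dots> = 2 powr p" by (simp add: powr_minus_divide powr_divide)
        finally show ?thesis by simp
      next
        case False
        have "norm x powr (-p) \<le> 1 powr (-p)"
          using x False by (intro powr_mono2) auto
        then show ?thesis by simp
      qed
      then show ?thesis using True x by (auto simp: indicator_def)
    qed (auto simp: indicator_def)
  qed
  also have "\<dots> = ennreal (max 1 (2 powr p)) * emeasure lborel (cball (0::'a) 1)"
    by (subst nn_integral_cmult) auto
  also have "\<dots> < \<infinity>"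
    using emeasure_lborel_cball_finite[of "0::'a" 1] by (simp add: ennreal_mult_less_top)
  finally show ?thesis .
qed

lemma gsh_bound:
  assumes p: "p < real DIM('a::euclidean_space)"
  shows "\<exists>K. \<forall>n. gsh p n TYPE('a) \<le> ennreal K"
proof -
  define q where "q = (2::real) powr (p - real DIM('a))"
  have q: "0 \<le> q" "q < 1" using p unfolding q_def by (auto intro: powr_less_one)
  define G1 where "G1 = enn2real (gsh p 1 TYPE('a))"
  have G1: "gsh p 1 TYPE('a) = ennreal G1" "G1 \<ge> 0"
  proof -
    have "gsh p 1 TYPE('a) \<noteq> \<infinity>" using gsh_1_finite[of p, where 'a='a] by simp
    then show "gsh p 1 TYPE('a) = ennreal G1" unfolding G1_def by (subst ennreal_enn2real_if) simp
  qed (simp add: G1_def)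
  define K where "K = G1 / (1 - q)"
  have K: "G1 + q * K = K" using q unfolding K_def by (simp add: field_simps)
  have "gsh p n TYPE('a) \<le> ennreal K" for n
  proof (induction n)
    case 0
    then show ?case by (simp add: gsh_0)
  next
    case (Suc n)
    have "gsh p (Suc n) TYPE('a) = ennreal G1 + ennreal q * gsh p n TYPE('a)"
      unfolding gsh_Suc[of p n] G1(1) q_def ..
    also have "\<dots> \<le> ennreal G1 + ennreal q * ennreal K"
      using Suc by (intro add_left_mono mult_left_mono) auto
    also have "\<dots> = ennreal K"
      using q G1 K by (simp add: ennreal_mult[symmetric] ennreal_plus[symmetric] K_def)
    finally show ?case .
  qed
  then show ?thesis by blast
qed

lemma Jp_finite:
  assumes p: "p < real DIM('a::euclidean_space)"
  shows "Jp p 1 TYPE('a) < \<infinity>"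
proof -
  obtain K where K: "\<And>n. gsh p n TYPE('a) \<le> ennreal K" using gsh_bound[OF p] by blast
  let ?f = "\<lambda>n (x::'a). indicator (shell ((1/2)^n) 1 :: 'a set) x * ennreal (norm x powr (-p))"
  have inc: "incseq ?f"
  proof (rule incseq_SucI, rule le_funI)
    fix n and x :: 'a
    have "(1/2::real)^Suc n \<le> (1/2)^n" by (simp add: power_decreasing)
    then have "x \<in> shell ((1/2)^n) 1 \<Longrightarrow> x \<in> shell ((1/2)^Suc n) 1" unfolding shell_def mem_Collect_eq
      by (meson order.strict_trans1)
    then show "?f n x \<le> ?f (Suc n) x" by (auto simp: indicator_def)
  qed
  have pw: "indicator (cball (0::'a) 1) x * ennreal (norm x powr (-p)) = (SUP n. ?f n x)" for x
  proof (cases "x = 0 \<or> norm x > 1")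
    case True
    then have "?f n x = 0" for n unfolding shell_def by (auto simp: indicator_def)
    then have "(\<lambda>n. ?f n x) = (\<lambda>n. 0)" by (intro ext)
    then have "(SUP n. ?f n x) = (SUP n::nat. (0::ennreal))" by (rule arg_cong)
    then have "(SUP n. ?f n x) = 0" by simp
    then show ?thesis using True by (auto simp: indicator_def)
  next
    case False
    then have x: "0 < norm x" "norm x \<le> 1" by auto
    obtain N where N: "(1/2::real)^N < norm x" using real_arch_pow_inv[OF x(1), of "1/2"] by auto
    have le: "?f n x \<le> ennreal (norm x powr (-p))" for n by (auto simp: indicator_def)
    have eqN: "?f N x = ennreal (norm x powr (-p))" using N x by (auto simp: indicator_def shell_def)
    have "(SUP n. ?f n x) = ennreal (norm x powr (-p))"
    proof (rule antisym)
      show "(SUP n. ?f n x) \<le> ennreal (norm x powr (-p))" by (rule SUP_least) (rule le)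
      show "ennreal (norm x powr (-p)) \<le> (SUP n. ?f n x)" by (rule SUP_upper2[of N]) (simp_all only: eqN UNIV_I order_refl)
    qed
    then show ?thesis using x by (auto simp: indicator_def)
  qed
  have "Jp p 1 TYPE('a) = (\<integral>\<^sup>+x. (SUP n. ?f n x) \<partial>lborel)"
    unfolding Jp_def pw ..
  also have "\<dots> = (SUP n. \<integral>\<^sup>+x. ?f n x \<partial>lborel)"
    by (rule nn_integral_monotone_convergence_SUP[OF inc]) auto
  also have "\<dots> = (SUP n. gsh p n TYPE('a))" unfolding gsh_def ..
  also have "\<dots> \<le> ennreal K" using K by (intro SUP_least) auto
  also have "\<dots> < \<infinity>" by simp
  finally show ?thesis .
qed


definition gpw :: "real \<Rightarrow> real \<Rightarrow> real \<Rightarrow> real" where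
  "gpw c m z = c * max z 0 powr m"

lemma gpw_cont: "m > 0 \<Longrightarrow> continuous_on UNIV (gpw c m)"
  unfolding gpw_def
  by (intro continuous_intros continuous_on_powr') (auto intro: continuous_intros)

lemma gpw_deriv:
  assumes m: "m > 1"
  shows "(gpw c m has_real_derivative gpw (c * m) (m - 1) z) (at z)"
proof -
  consider "z > 0" | "z < 0" | "z = 0" by linarith
  then show ?thesis
  proof cases
    case 1
    have "((\<lambda>y. c * y powr m) has_real_derivative c * (m * z powr (m - 1))) (at z)"
      using 1 by (intro DERIV_cmult has_real_derivative_powr)
    then have "(gpw c m has_real_derivative c * (m * z powr (m - 1))) (at z)"
      by (rule has_field_derivative_transform_within_open[where S="{0<..}"])
         (use 1 in \<open>auto simp: gpw_def max_def\<close>)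
    moreover have "gpw (c * m) (m - 1) z = c * (m * z powr (m - 1))" using 1 by (simp add: gpw_def)
    ultimately show ?thesis by simp
  next
    case 2
    have "((\<lambda>y. 0) has_real_derivative 0) (at z)" by simp
    then have "(gpw c m has_real_derivative 0) (at z)"
      by (rule has_field_derivative_transform_within_open[where S="{..<0}"])
         (use 2 m in \<open>auto simp: gpw_def max_def\<close>)
    moreover have "gpw (c * m) (m - 1) z = 0" using 2 m by (simp add: gpw_def)
    ultimately show ?thesis by simp
  next
    case 3
    have "((\<lambda>y. (gpw c m y - gpw c m 0) / (y - 0)) \<longlongrightarrow> 0) (at 0)"
    proof (rule Lim_null_comparison)
      show "\<forall>\<^sub>F y in at 0. norm ((gpw c m y - gpw c m 0) / (y - 0)) \<le> \<bar>c\<bar> * \<bar>y\<bar> powr (m - 1)"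
      proof (rule always_eventually, rule allI)
        fix y :: real
        show "norm ((gpw c m y - gpw c m 0) / (y - 0)) \<le> \<bar>c\<bar> * \<bar>y\<bar> powr (m - 1)"
        proof (cases "y > 0")
          case True
          have e: "\<bar>c\<bar> * y powr m / y = \<bar>c\<bar> * y powr (m - 1)"
            using True by (simp add: powr_diff)
          then show ?thesis using True m
            by (simp add: gpw_def max_def abs_mult del: times_divide_eq_right)
        next
          case False
          then show ?thesis using m by (simp add: gpw_def max_def)
        qed
      qed
      show "((\<lambda>y. \<bar>c\<bar> * \<bar>y\<bar> powr (m - 1)) \<longlongrightarrow> 0) (at 0)"
      proof -
        have "((\<lambda>y::real. \<bar>y\<bar> powr (m - 1)) \<longlongrightarrow> 0) (at 0)"
          using m by (intro tendsto_zero_powrI) (auto intro!: tendsto_eq_intros)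
        then show ?thesis by (rule tendsto_mult_right_zero)
      qed
    qed
    then have "(gpw c m has_real_derivative 0) (at 0)"
      by (simp add: has_field_derivative_iff)
    moreover have "gpw (c * m) (m - 1) 0 = 0" using m by (simp add: gpw_def)
    ultimately show ?thesis using 3 by simp
  qed
qed



lemma div_le_self_real: "(X::real) \<ge> 0 \<Longrightarrow> d \<ge> 1 \<Longrightarrow> X / d \<le> X"
proof -
  assume "X \<ge> 0" "d \<ge> 1"
  then have "X / d \<le> X / 1" by (intro divide_left_mono) auto
  then show ?thesis by simp
qed

lemma young_pt:
  fixes \<alpha> v A B :: real
  assumes "\<alpha> > 1" "v \<ge> 0" "A \<ge> 0" "B > 0"
  shows "v * A - B * v powr \<alpha> \<le> A powr (\<alpha> / (\<alpha> - 1)) * B powr (- 1 / (\<alpha> - 1))"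
proof -
  define q where "q = \<alpha> / (\<alpha> - 1)"
  have q: "q > 1" "1/\<alpha> + 1/q = 1" using assms(1) unfolding q_def by (auto simp: field_simps)
  define a where "a = v * B powr (1/\<alpha>)"
  define b where "b = A * B powr (-1/\<alpha>)"
  have ab: "a * b = v * A"
  proof -
    have "B powr (1/\<alpha>) * B powr (-1/\<alpha>) = 1"
      using assms by (simp add: powr_add[symmetric])
    have "a * b = v * A * (B powr (1/\<alpha>) * B powr (-1/\<alpha>))" unfolding a_def b_def by (simp only: mult_ac)
    then show ?thesis using \<open>B powr (1/\<alpha>) * B powr (-1/\<alpha>) = 1\<close> by simp
  qed
  have Y: "a * b \<le> a powr \<alpha> / \<alpha> + b powr q / q"
  proof -
    have "a \<ge> 0" "b \<ge> 0" using assms unfolding a_def b_def by auto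
    then show ?thesis using Youngs_inequality[OF assms(1) q(1) q(2)] by blast
  qed
  have E1: "a powr \<alpha> = B * v powr \<alpha>"
  proof -
    have "a powr \<alpha> = v powr \<alpha> * (B powr (1/\<alpha>)) powr \<alpha>"
      unfolding a_def using assms by (auto intro!: powr_mult)
    also have "(B powr (1/\<alpha>)) powr \<alpha> = B" using assms by (simp add: powr_powr)
    finally show ?thesis by (simp add: mult.commute)
  qed
  have E2: "b powr q = A powr q * B powr (-1 / (\<alpha> - 1))"
  proof -
    have "(B powr (-1/\<alpha>)) powr q = B powr (-1 / (\<alpha> - 1))"
      using assms unfolding q_def by (simp add: powr_powr)
    moreover have "b powr q = A powr q * (B powr (-1/\<alpha>)) powr q"
      unfolding b_def using assms by (auto intro!: powr_mult)
    ultimately show ?thesis by simp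
  qed
  from Y have "v * A \<le> B * v powr \<alpha> / \<alpha> + A powr q * B powr (-1 / (\<alpha> - 1)) / q"
    unfolding ab E1 E2 .
  moreover have "B * v powr \<alpha> / \<alpha> \<le> B * v powr \<alpha>"
    using assms by (intro div_le_self_real) auto  
  moreover have "A powr q * B powr (-1 / (\<alpha> - 1)) / q \<le> A powr q * B powr (-1 / (\<alpha> - 1))"
    using q by (intro div_le_self_real) auto
  ultimately show ?thesis unfolding q_def by linarith
qed


definition Dfun :: "('a::euclidean_space \<Rightarrow> real) \<Rightarrow> 'a \<Rightarrow> 'a \<Rightarrow> real" where
  "Dfun f v x = frechet_derivative f (at x) v"

lemma smooth_funD:
  assumes "smooth_fun f"
  shows "\<And>x. f differentiable (at x)" "\<And>v. smooth_fun (Dfun f v)"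
  using assms by (auto elim: smooth_fun.cases simp: Dfun_def[abs_def])

lemma smooth_has_deriv:
  assumes "smooth_fun f"
  shows "(f has_derivative (\<lambda>v. Dfun f v x)) (at x)"
proof -
  have "(f has_derivative frechet_derivative f (at x)) (at x)"
    using smooth_funD(1)[OF assms] frechet_derivative_works by blast
  then show ?thesis by (simp add: Dfun_def)
qed

lemma smooth_cont:
  assumes "smooth_fun f"
  shows "continuous_on UNIV f"
  using smooth_funD(1)[OF assms]
  by (simp add: continuous_on_eq_continuous_at differentiable_imp_continuous_within)

lemma Dfun_scale:
  assumes "smooth_fun f"
  shows "Dfun f (c *\<^sub>R v) x = c * Dfun f v x"
proof -
  have "bounded_linear (\<lambda>v. Dfun f v x)"
    using smooth_has_deriv[OF assms] by (rule has_derivative_bounded_linear)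
  then show ?thesis using linear.scaleR[OF bounded_linear.linear] by fastforce
qed

lemma has_derivative_eq:
  "(f has_derivative g) F \<Longrightarrow> g = h \<Longrightarrow> (f has_derivative h) F"
  by simp

lemma scale_comp_deriv:
  assumes "smooth_fun f" "s > 0"
  shows "((\<lambda>x. f (x /\<^sub>R s)) has_derivative (\<lambda>v. Dfun f v (x /\<^sub>R s) / s)) (at x)"
proof -
  have sc: "((\<lambda>x::'a. x /\<^sub>R s) has_derivative (\<lambda>v. v /\<^sub>R s)) (at x)"
    by (auto intro!: derivative_eq_intros)
  have "((\<lambda>x. f (x /\<^sub>R s)) has_derivative (\<lambda>v. Dfun f (v /\<^sub>R s) (x /\<^sub>R s))) (at x)"
    by (rule has_derivative_compose[OF sc smooth_has_deriv[OF assms(1)]])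
  then show ?thesis
    by (rule has_derivative_eq) (auto simp: Dfun_scale[OF assms(1)] divide_inverse mult.commute)
qed

lemma gpw_comp_deriv:
  assumes "(g has_derivative g') (at x)" "m > 1"
  shows "((\<lambda>x. gpw c m (g x)) has_derivative (\<lambda>v. gpw (c * m) (m - 1) (g x) * g' v)) (at x)"
proof -
  have "(gpw c m has_derivative (\<lambda>h. gpw (c * m) (m - 1) (g x) * h)) (at (g x))"
    using gpw_deriv[OF assms(2), of c "g x"] by (simp add: has_field_derivative_def mult_commute_abs)
  from has_derivative_compose[OF assms(1) this] show ?thesis .
qed


lemma eta_C12:
  fixes \<phi> :: "'a::euclidean_space \<Rightarrow> real" and T l :: real and k :: nat
  assumes sm: "smooth_fun \<phi>" and T: "T > 0" and l: "l > 2"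
  defines "\<eta> \<equiv> \<lambda>t x. (1 - 2 * t / T) ^ k * gpw 1 l (\<phi> (x /\<^sub>R sqrt T))"
    and "\<eta>t \<equiv> \<lambda>t x. (- (2 * real k / T) * (1 - 2 * t / T) ^ (k - 1)) * gpw 1 l (\<phi> (x /\<^sub>R sqrt T))"
    and "Dx \<equiv> \<lambda>t x v. (1 - 2 * t / T) ^ k / sqrt T * (gpw l (l - 1) (\<phi> (x /\<^sub>R sqrt T)) * Dfun \<phi> v (x /\<^sub>R sqrt T))"
    and "Dxx \<equiv> \<lambda>t x v w. (1 - 2 * t / T) ^ k / T *
          (gpw (l * (l - 1)) (l - 2) (\<phi> (x /\<^sub>R sqrt T)) * Dfun \<phi> w (x /\<^sub>R sqrt T) * Dfun \<phi> v (x /\<^sub>R sqrt T)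
           + gpw l (l - 1) (\<phi> (x /\<^sub>R sqrt T)) * Dfun (Dfun \<phi> v) w (x /\<^sub>R sqrt T))"
  shows "C12_with T \<eta> \<eta>t Dx Dxx"
proof -
  define s where "s = sqrt T"
  have s: "s > 0" "s * s = T" using T unfolding s_def by auto
  have sm1: "smooth_fun (Dfun \<phi> v)" for v using smooth_funD(2)[OF sm] .
  have sm2: "smooth_fun (Dfun (Dfun \<phi> v) w)" for v w using smooth_funD(2)[OF sm1] .
  have g0: "gpw (1 * l) (l - 1) = gpw l (l - 1)" by simp
  have g1: "gpw (l * (l - 1)) (l - 1 - 1) = gpw (l * (l - 1)) (l - 2)" by (simp add: diff_diff_eq)
  have D1: "((\<lambda>t. \<eta> t x) has_real_derivative \<eta>t t x) (at t within {0..T})" for t x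
  proof -
    have a: "((\<lambda>t. 1 - 2 * t / T) has_real_derivative (- (2 / T))) (at t within {0..T})"
      using T by (auto intro!: derivative_eq_intros)
    have "((\<lambda>t. (1 - 2 * t / T) ^ k * gpw 1 l (\<phi> (x /\<^sub>R sqrt T))) has_real_derivative
        (of_nat k * (- (2 / T) * (1 - 2 * t / T) ^ (k - Suc 0))) * gpw 1 l (\<phi> (x /\<^sub>R sqrt T))) (at t within {0..T})"
      by (rule DERIV_cmult_right[OF DERIV_power[OF a]])
    moreover have "of_nat k * (- (2 / T) * (1 - 2 * t / T) ^ (k - Suc 0)) = - (2 * real k / T) * (1 - 2 * t / T) ^ (k - 1)"
      by simp
    ultimately show ?thesis unfolding \<eta>_def \<eta>t_def by (simp add: mult_ac)
  qed
  have D2: "(\<eta> t has_derivative Dx t x) (at x)" for t x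
  proof -
    have "((\<lambda>x. gpw 1 l (\<phi> (x /\<^sub>R s))) has_derivative
        (\<lambda>v. gpw (1 * l) (l - 1) (\<phi> (x /\<^sub>R s)) * (Dfun \<phi> v (x /\<^sub>R s) / s))) (at x)"
      by (rule gpw_comp_deriv[OF scale_comp_deriv[OF sm s(1)]]) (use l in simp)
    then have "((\<lambda>x. (1 - 2 * t / T) ^ k * gpw 1 l (\<phi> (x /\<^sub>R s))) has_derivative
        (\<lambda>v. (1 - 2 * t / T) ^ k * (gpw (1 * l) (l - 1) (\<phi> (x /\<^sub>R s)) * (Dfun \<phi> v (x /\<^sub>R s) / s)))) (at x)"
      by (rule has_derivative_mult_right)
    then show ?thesis unfolding \<eta>_def Dx_def s_def[symmetric]
      by (rule has_derivative_eq) (auto simp: g0 field_simps)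
  qed
  have D3: "((\<lambda>y. Dx t y v) has_derivative Dxx t x v) (at x)" for t x v
  proof -
    have P: "((\<lambda>x. gpw l (l - 1) (\<phi> (x /\<^sub>R s))) has_derivative
        (\<lambda>h. gpw (l * (l - 1)) (l - 1 - 1) (\<phi> (x /\<^sub>R s)) * (Dfun \<phi> h (x /\<^sub>R s) / s))) (at x)"
      by (rule gpw_comp_deriv[OF scale_comp_deriv[OF sm s(1)]]) (use l in simp)
    have Q: "((\<lambda>x. Dfun \<phi> v (x /\<^sub>R s)) has_derivative (\<lambda>h. Dfun (Dfun \<phi> v) h (x /\<^sub>R s) / s)) (at x)"
      by (rule scale_comp_deriv[OF sm1 s(1)])
    have "((\<lambda>x. (1 - 2 * t / T) ^ k / s * (gpw l (l - 1) (\<phi> (x /\<^sub>R s)) * Dfun \<phi> v (x /\<^sub>R s))) has_derivative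
        (\<lambda>h. (1 - 2 * t / T) ^ k / s * (gpw l (l - 1) (\<phi> (x /\<^sub>R s)) * (Dfun (Dfun \<phi> v) h (x /\<^sub>R s) / s)
          + gpw (l * (l - 1)) (l - 1 - 1) (\<phi> (x /\<^sub>R s)) * (Dfun \<phi> h (x /\<^sub>R s) / s) * Dfun \<phi> v (x /\<^sub>R s)))) (at x)"
      by (rule has_derivative_mult_right[OF has_derivative_mult[OF P Q]])
    then show ?thesis unfolding Dxx_def Dx_def s_def[symmetric]
      by (rule has_derivative_eq) (use s in \<open>auto simp: g1 field_simps\<close>)
  qed
  have cphi: "continuous_on UNIV (\<lambda>z::real \<times> 'a. f (snd z /\<^sub>R sqrt T))" if "smooth_fun f" for f
    by (rule continuous_on_compose2[OF smooth_cont[OF that]]) (auto intro!: continuous_intros)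
  have cg: "continuous_on UNIV (\<lambda>z::real \<times> 'a. gpw c m (\<phi> (snd z /\<^sub>R sqrt T)))" if "m > 0" for c m
    by (rule continuous_on_compose2[OF gpw_cont[OF that] cphi[OF sm]]) auto
  have cD: "continuous_on UNIV (\<lambda>z::real \<times> 'a. Dfun \<phi> v (snd z /\<^sub>R sqrt T))" for v
    by (rule cphi[OF sm1])
  have cDD: "continuous_on UNIV (\<lambda>z::real \<times> 'a. Dfun (Dfun \<phi> v) w (snd z /\<^sub>R sqrt T))" for v w
    by (rule cphi[OF sm2])
  have C1: "continuous_on UNIV (\<lambda>z. \<eta> (fst z) (snd z))"
    unfolding \<eta>_def using l T by (auto intro!: continuous_intros cg)
  have C2: "continuous_on UNIV (\<lambda>z. \<eta>t (fst z) (snd z))"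
    unfolding \<eta>t_def using l T by (auto intro!: continuous_intros cg)
  have C3: "continuous_on UNIV (\<lambda>z. Dx (fst z) (snd z) v)" for v
    unfolding Dx_def using l T by (auto intro!: continuous_intros cg cD)
  have C4: "continuous_on UNIV (\<lambda>z. Dxx (fst z) (snd z) v w)" for v w
    unfolding Dxx_def using l T by (auto intro!: continuous_intros cg cD cDD)
  show ?thesis
    unfolding C12_with_def case_prod_unfold
    using D1 D2 D3 continuous_on_subset[OF C1] continuous_on_subset[OF C2]
      continuous_on_subset[OF C3] continuous_on_subset[OF C4] by auto
qed


lemma pow_combine:
  fixes c \<sigma> \<Phi> r \<alpha> :: real
  assumes c: "c \<ge> 0" and pos: "\<sigma> > 0" "\<Phi> > 0" "r > 0" and \<alpha>: "\<alpha> > 1"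
  shows "(c * \<sigma> powr i * \<Phi> powr j * r powr m) powr (\<alpha>/(\<alpha>-1)) * ((r powr \<gamma> * \<sigma> powr kk * \<Phi> powr ll) / 3) powr (-1/(\<alpha>-1))
   = 3 powr (1/(\<alpha>-1)) * c powr (\<alpha>/(\<alpha>-1)) * \<sigma> powr (i*(\<alpha>/(\<alpha>-1)) - kk/(\<alpha>-1))
      * \<Phi> powr (j*(\<alpha>/(\<alpha>-1)) - ll/(\<alpha>-1)) * r powr (m*(\<alpha>/(\<alpha>-1)) - \<gamma>/(\<alpha>-1))"
proof (cases "c = 0")
  case True
  then show ?thesis using \<alpha> by simp
next
  case False
  then have c: "c > 0" using c by simp
  have "\<alpha> - 1 \<noteq> 0" using \<alpha> by simp
  then show ?thesis
    using c pos
    apply (simp add: powr_def ln_mult ln_div exp_add[symmetric] exp_diff[symmetric])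
    apply (simp add: divide_simps)
    apply (simp add: algebra_simps)
    done
qed


lemma bound_aux:
  fixes P x y R :: real
  assumes "0 \<le> P" "0 \<le> x" "x \<le> 1" "0 \<le> y" "y \<le> 1" "0 \<le> R"
  shows "P * x * y * R \<le> P * R"
proof -
  have "x * y \<le> 1" using assms by (simp add: mult_le_one)
  then have "(P * R) * (x * y) \<le> (P * R) * 1" using assms by (intro mult_left_mono) auto
  then show ?thesis by (simp add: mult_ac)
qed

lemma key_pt:
  fixes \<alpha> \<gamma> a l T \<sigma> \<Phi> r v N1 N2 M1 M2 :: real and k :: nat
  assumes \<alpha>: "\<alpha> > 1" and T: "T > 0" and \<sigma>: "0 < \<sigma>" "\<sigma> \<le> 1" and \<Phi>: "0 < \<Phi>" "\<Phi> \<le> 1"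
    and r: "r > 0" and v: "v \<ge> 0"
    and k: "k \<ge> 2" "real k \<ge> \<alpha> / (\<alpha> - 1)" and l: "l > 2" "l \<ge> 2 * \<alpha> / (\<alpha> - 1)"
    and N: "0 \<le> N1" "N1 \<le> M1" "\<bar>N2\<bar> \<le> M2"
  shows "- (v * ((- (2 * real k / T) * \<sigma> ^ (k - 1) * \<Phi> powr l)
              + \<sigma> ^ k / T * (l * (l - 1) * \<Phi> powr (l - 2) * N1 + l * \<Phi> powr (l - 1) * N2)
              - a * r powr (-2) * (\<sigma> ^ k * \<Phi> powr l))
          + r powr \<gamma> * v powr \<alpha> * (\<sigma> ^ k * \<Phi> powr l))
     \<le> 3 powr (1 / (\<alpha> - 1)) * ((((2 * real k) powr (\<alpha> / (\<alpha> - 1)) + (l * (l - 1) * M1 + l * M2) powr (\<alpha> / (\<alpha> - 1)))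
           * T powr (- (\<alpha> / (\<alpha> - 1))) * r powr (- (\<gamma> / (\<alpha> - 1))))
         + \<bar>a\<bar> powr (\<alpha> / (\<alpha> - 1)) * r powr (- (2 * (\<alpha> / (\<alpha> - 1)) + \<gamma> / (\<alpha> - 1))))"
proof -
  define a' where "a' = \<alpha> / (\<alpha> - 1)"
  define c3 where "c3 = (3::real) powr (1 / (\<alpha> - 1))"
  define M where "M = l * (l - 1) * M1 + l * M2"
  have am: "\<alpha> - 1 \<noteq> 0" using \<alpha> by simp
  have a'pos: "a' > 0" using \<alpha> unfolding a'_def by simp
  have M0: "M \<ge> 0" using N l unfolding M_def by (intro add_nonneg_nonneg mult_nonneg_nonneg) auto
  have c30: "c3 \<ge> 0" unfolding c3_def by simp
  have sk: "\<sigma> ^ k = \<sigma> powr real k" using \<sigma> by (simp add: powr_realpow)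
  have sk1: "\<sigma> ^ (k - 1) = \<sigma> powr (real k - 1)" using \<sigma> k by (simp add: powr_realpow[symmetric] of_nat_diff)
  define B where "B = r powr \<gamma> * \<sigma> powr real k * \<Phi> powr l"
  have B: "B > 0" unfolding B_def using \<sigma> \<Phi> r by simp
  define A1 where "A1 = (2 * real k / T) * \<sigma> powr (real k - 1) * \<Phi> powr l * r powr 0"
  define A2 where "A2 = (M / T) * \<sigma> powr real k * \<Phi> powr (l - 2) * r powr 0"
  define A3 where "A3 = \<bar>a\<bar> * \<sigma> powr real k * \<Phi> powr l * r powr (-2)"
  have A1: "A1 \<ge> 0" "A2 \<ge> 0" "A3 \<ge> 0" unfolding A1_def A2_def A3_def using T M0 by auto
  have h1: "- (- (2 * real k / T) * \<sigma> ^ (k - 1) * \<Phi> powr l) = A1"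
    unfolding A1_def sk1 using r by simp
  have h2: "- (\<sigma> ^ k / T * (l * (l - 1) * \<Phi> powr (l - 2) * N1 + l * \<Phi> powr (l - 1) * N2)) \<le> A2"
  proof -
    have p1: "\<Phi> powr (l - 1) \<le> \<Phi> powr (l - 2)" using \<Phi> by (intro powr_mono') auto
    have "\<bar>l * (l - 1) * \<Phi> powr (l - 2) * N1 + l * \<Phi> powr (l - 1) * N2\<bar>
        \<le> l * (l - 1) * \<Phi> powr (l - 2) * M1 + l * \<Phi> powr (l - 1) * M2"
    proof -
      have "\<bar>l * (l - 1) * \<Phi> powr (l - 2) * N1\<bar> \<le> l * (l - 1) * \<Phi> powr (l - 2) * M1"
        using l N by (simp add: abs_mult mult_left_mono)
      moreover have "\<bar>l * \<Phi> powr (l - 1) * N2\<bar> \<le> l * \<Phi> powr (l - 1) * M2"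
        using l N by (simp add: abs_mult mult_left_mono)
      ultimately show ?thesis by (smt (verit) abs_triangle_ineq)
    qed
    also have "\<dots> \<le> l * (l - 1) * \<Phi> powr (l - 2) * M1 + l * \<Phi> powr (l - 2) * M2"
      using p1 l N by (intro add_left_mono mult_right_mono mult_left_mono) auto
    also have "\<dots> = \<Phi> powr (l - 2) * M" unfolding M_def by (simp add: algebra_simps)
    finally have bnd: "\<bar>l * (l - 1) * \<Phi> powr (l - 2) * N1 + l * \<Phi> powr (l - 1) * N2\<bar> \<le> \<Phi> powr (l - 2) * M" .
    have "- (\<sigma> ^ k / T * (l * (l - 1) * \<Phi> powr (l - 2) * N1 + l * \<Phi> powr (l - 1) * N2))
        \<le> \<sigma> ^ k / T * \<bar>l * (l - 1) * \<Phi> powr (l - 2) * N1 + l * \<Phi> powr (l - 1) * N2\<bar>"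
      using \<sigma> T by (smt (verit) abs_ge_minus_self divide_nonneg_pos mult_left_mono mult_minus_right zero_le_power)
    also have "\<dots> \<le> \<sigma> ^ k / T * (\<Phi> powr (l - 2) * M)"
      using bnd \<sigma> T by (intro mult_left_mono) auto
    also have "\<dots> = A2" unfolding A2_def sk using r by simp
    finally show ?thesis .
  qed
  have h3: "a * r powr (-2) * (\<sigma> ^ k * \<Phi> powr l) \<le> A3"
  proof -
    have "a * r powr (-2) * (\<sigma> ^ k * \<Phi> powr l) \<le> \<bar>a\<bar> * (r powr (-2) * (\<sigma> ^ k * \<Phi> powr l))"
      using \<sigma> by (smt (verit) abs_ge_self mult.assoc mult_right_mono powr_ge_zero zero_le_mult_iff zero_le_power)
    then show ?thesis unfolding A3_def sk by (simp add: mult_ac)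
  qed
  have eqB: "r powr \<gamma> * v powr \<alpha> * (\<sigma> ^ k * \<Phi> powr l) = 3 * ((B / 3) * v powr \<alpha>)"
    unfolding B_def sk by (simp add: mult_ac)
  have step: "LHS \<le> (v * A1 - (B/3) * v powr \<alpha>) + (v * A2 - (B/3) * v powr \<alpha>) + (v * A3 - (B/3) * v powr \<alpha>)"
    if "LHS = - (v * ((- (2 * real k / T) * \<sigma> ^ (k - 1) * \<Phi> powr l)
              + \<sigma> ^ k / T * (l * (l - 1) * \<Phi> powr (l - 2) * N1 + l * \<Phi> powr (l - 1) * N2)
              - a * r powr (-2) * (\<sigma> ^ k * \<Phi> powr l))
          + r powr \<gamma> * v powr \<alpha> * (\<sigma> ^ k * \<Phi> powr l))" for LHS
  proof -
    have "v * (- (\<sigma> ^ k / T * (l * (l - 1) * \<Phi> powr (l - 2) * N1 + l * \<Phi> powr (l - 1) * N2))) \<le> v * A2"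
      using h2 v by (intro mult_left_mono) auto
    moreover have "v * (a * r powr (-2) * (\<sigma> ^ k * \<Phi> powr l)) \<le> v * A3"
      using h3 v by (intro mult_left_mono) auto
    moreover have "v * (- (- (2 * real k / T) * \<sigma> ^ (k - 1) * \<Phi> powr l)) = v * A1"
      using h1 by simp
    ultimately show ?thesis unfolding that eqB by (simp add: algebra_simps)
  qed
  have B3: "B / 3 > 0" using B by simp
  have y1: "v * A1 - (B/3) * v powr \<alpha> \<le> A1 powr a' * (B/3) powr (-1/(\<alpha>-1))"
    using young_pt[OF \<alpha> v A1(1) B3] unfolding a'_def .
  have y2: "v * A2 - (B/3) * v powr \<alpha> \<le> A2 powr a' * (B/3) powr (-1/(\<alpha>-1))"
    using young_pt[OF \<alpha> v A1(2) B3] unfolding a'_def .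
  have y3: "v * A3 - (B/3) * v powr \<alpha> \<le> A3 powr a' * (B/3) powr (-1/(\<alpha>-1))"
    using young_pt[OF \<alpha> v A1(3) B3] unfolding a'_def .
  have Tp: "(c / T) powr a' = c powr a' * T powr (- a')" if "c \<ge> 0" for c
    using that T by (simp add: powr_divide powr_minus_divide)
  have t1: "A1 powr a' * (B/3) powr (-1/(\<alpha>-1)) \<le> c3 * (2 * real k) powr a' * T powr (- a') * r powr (- (\<gamma> / (\<alpha> - 1)))"
  proof -
    have "A1 powr a' * (B/3) powr (-1/(\<alpha>-1))
        = c3 * (2 * real k / T) powr a' * \<sigma> powr ((real k - 1) * a' - real k / (\<alpha> - 1))
            * \<Phi> powr (l * a' - l / (\<alpha> - 1)) * r powr (0 * a' - \<gamma> / (\<alpha> - 1))"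
      unfolding A1_def B_def a'_def c3_def using T \<sigma> \<Phi> r \<alpha> by (intro pow_combine) auto
    also have "(real k - 1) * a' - real k / (\<alpha> - 1) = real k - a'"
    proof -
      have "\<alpha> - 1 \<noteq> 0" using \<alpha> by simp
      then show ?thesis unfolding a'_def by (simp add: divide_simps) (simp add: algebra_simps)
    qed
    also have "l * a' - l / (\<alpha> - 1) = l"
      using am unfolding a'_def by (simp add: divide_simps; simp add: algebra_simps)
    also have "c3 * (2 * real k / T) powr a' * \<sigma> powr (real k - a') * \<Phi> powr l * r powr (0 * a' - \<gamma> / (\<alpha> - 1))
        \<le> c3 * (2 * real k / T) powr a' * r powr (0 * a' - \<gamma> / (\<alpha> - 1))"
      using \<sigma> \<Phi> c30 k l unfolding a'_def by (intro bound_aux powr_le1) auto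
    also have "\<dots> = c3 * (2 * real k) powr a' * T powr (- a') * r powr (- (\<gamma> / (\<alpha> - 1)))"
      using Tp[of "2 * real k"] by simp
    finally show ?thesis .
  qed
  have t2: "A2 powr a' * (B/3) powr (-1/(\<alpha>-1)) \<le> c3 * M powr a' * T powr (- a') * r powr (- (\<gamma> / (\<alpha> - 1)))"
  proof -
    have "A2 powr a' * (B/3) powr (-1/(\<alpha>-1))
        = c3 * (M / T) powr a' * \<sigma> powr (real k * a' - real k / (\<alpha> - 1))
            * \<Phi> powr ((l - 2) * a' - l / (\<alpha> - 1)) * r powr (0 * a' - \<gamma> / (\<alpha> - 1))"
      unfolding A2_def B_def a'_def c3_def using T \<sigma> \<Phi> r \<alpha> M0 by (intro pow_combine) auto
    also have "real k * a' - real k / (\<alpha> - 1) = real k"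
      using am unfolding a'_def by (simp add: divide_simps; simp add: algebra_simps)
    also have "(l - 2) * a' - l / (\<alpha> - 1) = l - 2 * a'"
      using am unfolding a'_def by (simp add: divide_simps; simp add: algebra_simps)
    also have "c3 * (M / T) powr a' * \<sigma> powr (real k) * \<Phi> powr (l - 2 * a') * r powr (0 * a' - \<gamma> / (\<alpha> - 1))
        \<le> c3 * (M / T) powr a' * r powr (0 * a' - \<gamma> / (\<alpha> - 1))"
      using \<sigma> \<Phi> c30 k l unfolding a'_def by (intro bound_aux powr_le1) auto
    also have "\<dots> = c3 * M powr a' * T powr (- a') * r powr (- (\<gamma> / (\<alpha> - 1)))"
      using Tp[OF M0] by simp
    finally show ?thesis .
  qed
  have t3: "A3 powr a' * (B/3) powr (-1/(\<alpha>-1)) \<le> c3 * \<bar>a\<bar> powr a' * r powr (- (2 * a' + \<gamma> / (\<alpha> - 1)))"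
  proof -
    have "A3 powr a' * (B/3) powr (-1/(\<alpha>-1))
        = c3 * \<bar>a\<bar> powr a' * \<sigma> powr (real k * a' - real k / (\<alpha> - 1))
            * \<Phi> powr (l * a' - l / (\<alpha> - 1)) * r powr ((-2) * a' - \<gamma> / (\<alpha> - 1))"
      unfolding A3_def B_def a'_def c3_def using T \<sigma> \<Phi> r \<alpha> by (intro pow_combine) auto
    also have "real k * a' - real k / (\<alpha> - 1) = real k"
      using am unfolding a'_def by (simp add: divide_simps; simp add: algebra_simps)
    also have "l * a' - l / (\<alpha> - 1) = l"
      using am unfolding a'_def by (simp add: divide_simps; simp add: algebra_simps)
    also have "(-2) * a' - \<gamma> / (\<alpha> - 1) = - (2 * a' + \<gamma> / (\<alpha> - 1))" by simp
    also have "c3 * \<bar>a\<bar> powr a' * \<sigma> powr (real k) * \<Phi> powr l * r powr (- (2 * a' + \<gamma> / (\<alpha> - 1)))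
        \<le> c3 * \<bar>a\<bar> powr a' * r powr (- (2 * a' + \<gamma> / (\<alpha> - 1)))"
      using \<sigma> \<Phi> c30 k l by (intro bound_aux powr_le1) auto
    finally show ?thesis .
  qed
  have "- (v * ((- (2 * real k / T) * \<sigma> ^ (k - 1) * \<Phi> powr l)
              + \<sigma> ^ k / T * (l * (l - 1) * \<Phi> powr (l - 2) * N1 + l * \<Phi> powr (l - 1) * N2)
              - a * r powr (-2) * (\<sigma> ^ k * \<Phi> powr l))
          + r powr \<gamma> * v powr \<alpha> * (\<sigma> ^ k * \<Phi> powr l))
     \<le> c3 * (2 * real k) powr a' * T powr (- a') * r powr (- (\<gamma> / (\<alpha> - 1)))
       + c3 * M powr a' * T powr (- a') * r powr (- (\<gamma> / (\<alpha> - 1)))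
       + c3 * \<bar>a\<bar> powr a' * r powr (- (2 * a' + \<gamma> / (\<alpha> - 1)))"
    using step[OF refl] y1 y2 y3 t1 t2 t3 by linarith
  also have "\<dots> = 3 powr (1 / (\<alpha> - 1)) * ((((2 * real k) powr (\<alpha> / (\<alpha> - 1)) + (l * (l - 1) * M1 + l * M2) powr (\<alpha> / (\<alpha> - 1)))
           * T powr (- (\<alpha> / (\<alpha> - 1))) * r powr (- (\<gamma> / (\<alpha> - 1))))
         + \<bar>a\<bar> powr (\<alpha> / (\<alpha> - 1)) * r powr (- (2 * (\<alpha> / (\<alpha> - 1)) + \<gamma> / (\<alpha> - 1))))"
    unfolding c3_def a'_def M_def by (simp add: algebra_simps)
  finally show ?thesis .
qed


lemma integral_le_nn:
  fixes f :: "'b \<Rightarrow> real"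
  assumes "integrable M f"
  shows "integral\<^sup>L M f \<le> enn2real (\<integral>\<^sup>+x. ennreal (f x) \<partial>M)"
proof -
  have "integral\<^sup>L M f \<le> integral\<^sup>L M (\<lambda>x. max 0 (f x))"
    using assms by (intro integral_mono) auto
  also have "\<dots> = enn2real (\<integral>\<^sup>+x. ennreal (max 0 (f x)) \<partial>M)"
    using assms by (intro integral_eq_nn_integral) auto
  also have "\<dots> = enn2real (\<integral>\<^sup>+x. ennreal (f x) \<partial>M)" by (simp add: ennreal_max_0)
  finally show ?thesis .
qed

lemma cont_bound:
  fixes f :: "'a::euclidean_space \<Rightarrow> real"
  assumes "continuous_on UNIV f"
  shows "\<exists>M. \<forall>y\<in>cball 0 1. \<bar>f y\<bar> \<le> M"
proof -
  have "compact (f ` cball 0 1)"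
    by (rule compact_continuous_image[OF continuous_on_subset[OF assms]]) auto
  then have "bounded (f ` cball 0 1)" by (rule compact_imp_bounded)
  then obtain M where "\<forall>z\<in>f ` cball 0 1. norm z \<le> M" unfolding bounded_iff by blast
  then show ?thesis by auto
qed

lemma sum_lap:
  fixes c X Y :: real
  shows "(\<Sum>b\<in>B. c * (X * f b * f b + Y * g b)) = c * (X * (\<Sum>b\<in>B. f b * f b) + Y * (\<Sum>b\<in>B. g b))"
  by (simp add: sum.distrib sum_distrib_left algebra_simps)



lemma lt_aux:
  fixes c n :: real
  assumes "0 < c" "inverse c * n < 1"
  shows "n < c"
proof -
  have "c * (inverse c * n) < c * 1" using assms by (intro mult_strict_left_mono) auto
  then show ?thesis using assms(1) by (simp add: mult.assoc[symmetric])
qed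

theorem lemma5p1:
  fixes \<alpha> \<gamma> a l :: real and F :: "real \<Rightarrow> real" and \<phi> :: "'a::euclidean_space \<Rightarrow> real"
  assumes "\<alpha> > 1"
    and "a = 0 \<Longrightarrow> real DIM('a) + \<gamma> < \<alpha> * real DIM('a)"
    and "a \<noteq> 0 \<Longrightarrow> real DIM('a) + \<gamma> < \<alpha> * (real DIM('a) - 2)"
    and "\<forall>z\<ge>0. F z = z powr \<alpha>"
    and "smooth_fun \<phi>"
    and "\<forall>x. 0 \<le> \<phi> x \<and> \<phi> x \<le> 1"
    and "\<forall>x. norm x \<le> 1/2 \<longrightarrow> \<phi> x = 1"
    and "closure {x. \<phi> x \<noteq> 0} \<subseteq> cball 0 1"
    and "l \<ge> max 3 (2 * \<alpha> / (\<alpha> - 1))"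
  shows "\<exists>C. \<forall>T u0 u. T > 0 \<and> L1_loc u0 \<and> (\<forall>t\<in>{0..<T}. \<forall>x. u t x \<ge> 0)
            \<and> weak_solution a \<gamma> \<alpha> F u0 T u \<longrightarrow>
          set_lebesgue_integral lborel (ball 0 (sqrt T)) (\<lambda>x. u0 x * \<phi> (x /\<^sub>R sqrt T) powr l)
            \<le> C * T powr (- (2 + \<gamma>) / (2 * (\<alpha> - 1)) + real DIM('a) / 2)"
proof -
  have \<alpha>: "\<alpha> > 1" using assms(1) .
  have sm: "smooth_fun \<phi>" using assms(5) .
  define d where "d = real DIM('a)"
  define a' where "a' = \<alpha> / (\<alpha> - 1)"
  define q where "q = \<gamma> / (\<alpha> - 1)"
  define p where "p = 2 * a' + q"
  define k :: nat where "k = nat \<lceil>a'\<rceil> + 1"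
  have am: "\<alpha> - 1 > 0" using \<alpha> by simp
  have a'1: "a' > 1" using \<alpha> unfolding a'_def by simp
  have k: "k \<ge> 2" "real k \<ge> a'"
  proof -
    have "\<lceil>a'\<rceil> \<ge> 2" using a'1 by (simp add: le_ceiling_iff)
    then show "k \<ge> 2" unfolding k_def by linarith
    have "a' \<le> real_of_int \<lceil>a'\<rceil>" by simp
    then show "real k \<ge> a'" unfolding k_def using a'1 by (simp; linarith)
  qed
  have l2: "l > 2" "l \<ge> 2 * \<alpha> / (\<alpha> - 1)" using assms(9) by auto
  have hq: "q < d"
  proof (cases "a = 0")
    case True
    then have "\<gamma> < (\<alpha> - 1) * d" using assms(2) unfolding d_def by (simp add: algebra_simps)
    then show ?thesis unfolding q_def using am by (simp add: divide_less_eq mult.commute)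
  next
    case False
    then have "\<gamma> < (\<alpha> - 1) * d - 2 * \<alpha>" using assms(3) unfolding d_def by (simp add: algebra_simps)
    then have "\<gamma> < (\<alpha> - 1) * d" using \<alpha> by linarith
    then show ?thesis unfolding q_def using am by (simp add: divide_less_eq mult.commute)
  qed
  have hp: "p < d" if "a \<noteq> 0"
  proof -
    have "\<gamma> < (\<alpha> - 1) * d - 2 * \<alpha>" using assms(3) that unfolding d_def by (simp add: algebra_simps)
    then have "\<gamma> / (\<alpha> - 1) < ((\<alpha> - 1) * d - 2 * \<alpha>) / (\<alpha> - 1)"
      using am by (intro divide_strict_right_mono) auto
    also have "\<dots> = d - 2 * a'" unfolding a'_def using am by (simp add: field_simps)
    finally show ?thesis unfolding p_def q_def by simp
  qed
  have cphi: "continuous_on UNIV \<phi>" by (rule smooth_cont[OF sm])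
  have phi_supp: "norm y < 1" if "\<phi> y \<noteq> 0" for y
  proof -
    have op: "open {y. \<phi> y \<noteq> 0}"
      using cphi by (simp add: open_Collect_neq continuous_on_const)
    have "{y. \<phi> y \<noteq> 0} \<subseteq> interior (closure {y. \<phi> y \<noteq> 0})"
      using op interior_maximal closure_subset by blast
    also have "\<dots> \<subseteq> interior (cball 0 1)" using assms(8) by (rule interior_mono)
    also have "\<dots> = ball 0 1" by simp
    finally show ?thesis using that by auto
  qed
  have smD: "smooth_fun (Dfun \<phi> b)" for b using smooth_funD(2)[OF sm] .
  have smDD: "smooth_fun (Dfun (Dfun \<phi> b) c)" for b c using smooth_funD(2)[OF smD] .
  have "continuous_on UNIV (\<lambda>y. \<Sum>b\<in>Basis. Dfun \<phi> b y * Dfun \<phi> b y)"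
    by (intro continuous_intros smooth_cont[OF smD])
  then obtain M1 where M1: "\<forall>y\<in>cball 0 1. \<bar>\<Sum>b\<in>Basis. Dfun \<phi> b y * Dfun \<phi> b y\<bar> \<le> M1"
    using cont_bound by blast
  have "continuous_on UNIV (\<lambda>y. \<Sum>b\<in>Basis. Dfun (Dfun \<phi> b) b y)"
    by (intro continuous_intros smooth_cont[OF smDD])
  then obtain M2 where M2: "\<forall>y\<in>cball 0 1. \<bar>\<Sum>b\<in>Basis. Dfun (Dfun \<phi> b) b y\<bar> \<le> M2"
    using cont_bound by blast
  have M1pos: "M1 \<ge> 0" using M1[rule_format, of 0] by simp
  have M2pos: "M2 \<ge> 0" using M2[rule_format, of 0] by simp
  define c3 where "c3 = (3::real) powr (1 / (\<alpha> - 1))"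
  define K1 where "K1 = c3 * ((2 * real k) powr a' + (l * (l - 1) * M1 + l * M2) powr a')"
  define K2 where "K2 = c3 * \<bar>a\<bar> powr a'"
  define Jq where "Jq = enn2real (Jp q 1 TYPE('a))"
  define Jpp where "Jpp = enn2real (Jp p 1 TYPE('a))"
  define C where "C = (K1 * Jq + K2 * Jpp) / 2"
  have K1pos: "K1 \<ge> 0" and K2pos: "K2 \<ge> 0" unfolding K1_def K2_def c3_def by auto
  have Jpos: "Jq \<ge> 0" "Jpp \<ge> 0" unfolding Jq_def Jpp_def by auto
  have Cpos: "C \<ge> 0" unfolding C_def using K1pos K2pos Jpos by auto
  show ?thesis
  proof (intro exI[of _ C] allI impI)
    fix T :: real and u0 :: "'a \<Rightarrow> real" and u :: "real \<Rightarrow> 'a \<Rightarrow> real"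
    assume H: "T > 0 \<and> L1_loc u0 \<and> (\<forall>t\<in>{0..<T}. \<forall>x. u t x \<ge> 0) \<and> weak_solution a \<gamma> \<alpha> F u0 T u"
    then have T: "T > 0" and upos: "\<And>t x. t \<in> {0..<T} \<Longrightarrow> u t x \<ge> 0"
      and ws: "weak_solution a \<gamma> \<alpha> F u0 T u" by auto
    define s where "s = sqrt T"
    have s: "s > 0" "s * s = T" using T unfolding s_def by auto
    define \<eta> where "\<eta> \<equiv> \<lambda>t x. (1 - 2 * t / T) ^ k * gpw 1 l (\<phi> (x /\<^sub>R sqrt T))"
    define \<eta>t where "\<eta>t \<equiv> \<lambda>t x. (- (2 * real k / T) * (1 - 2 * t / T) ^ (k - 1)) * gpw 1 l (\<phi> (x /\<^sub>R sqrt T))"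
    define Dx where "Dx \<equiv> \<lambda>t x v. (1 - 2 * t / T) ^ k / sqrt T * (gpw l (l - 1) (\<phi> (x /\<^sub>R sqrt T)) * Dfun \<phi> v (x /\<^sub>R sqrt T))"
    define Dxx where "Dxx \<equiv> \<lambda>t x v w. (1 - 2 * t / T) ^ k / T *
          (gpw (l * (l - 1)) (l - 2) (\<phi> (x /\<^sub>R sqrt T)) * Dfun \<phi> w (x /\<^sub>R sqrt T) * Dfun \<phi> v (x /\<^sub>R sqrt T)
           + gpw l (l - 1) (\<phi> (x /\<^sub>R sqrt T)) * Dfun (Dfun \<phi> v) w (x /\<^sub>R sqrt T))"
    have C12: "C12_with T \<eta> \<eta>t Dx Dxx"
      unfolding \<eta>_def \<eta>t_def Dx_def Dxx_def by (rule eta_C12[OF sm T l2(1)])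
    have gpw0: "gpw c m 0 = 0" if "m > 0" for c m using that by (simp add: gpw_def)
    have phi_out: "\<phi> (x /\<^sub>R sqrt T) = 0" if "norm x \<ge> sqrt T" for x
    proof (rule ccontr)
      assume "\<phi> (x /\<^sub>R sqrt T) \<noteq> 0"
      then have "norm (x /\<^sub>R sqrt T) < 1" by (rule phi_supp)
      then have "inverse (sqrt T) * norm x < 1" using T by simp
      then have "norm x < sqrt T" using lt_aux[of "sqrt T" "norm x"] T by simp
      then show False using that by simp
    qed
    have supp: "\<forall>t\<in>{0..T}. \<exists>K. compact K \<and> (\<forall>x. x \<notin> K \<longrightarrow> \<eta> t x = 0)"
    proof
      fix t
      show "\<exists>K. compact K \<and> (\<forall>x. x \<notin> K \<longrightarrow> \<eta> t x = 0)"
      proof (intro exI[of _ "cball 0 (sqrt T)"] conjI allI impI)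
        fix x :: 'a assume "x \<notin> cball 0 (sqrt T)"
        then have "\<phi> (x /\<^sub>R sqrt T) = 0" by (intro phi_out) auto
        then show "\<eta> t x = 0" unfolding \<eta>_def using l2 by (simp add: gpw0)
      qed simp
    qed
    have Thalf: "T / 2 \<in> {0..<T}" using T by simp
    note ws3 = ws[unfolded weak_solution_def, THEN conjunct2, THEN conjunct2, rule_format, OF Thalf conjI[OF C12 supp]]
    define G where "G = (\<lambda>z. u (fst z) (snd z) *
                    (\<eta>t (fst z) (snd z) + laplacian_of (Dxx (fst z) (snd z))
                     - a * norm (snd z) powr (-2) * \<eta> (fst z) (snd z))
                   + norm (snd z) powr \<gamma> * F (u (fst z) (snd z)) * \<eta> (fst z) (snd z))"
    have W: "integrable lborel (\<lambda>x. u (T/2) x * \<eta> (T/2) x)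
          \<and> integrable lborel (\<lambda>x. u0 x * \<eta> 0 x)
          \<and> set_integrable (lborel \<Otimes>\<^sub>M lborel) ({0..T/2} \<times> UNIV) G
          \<and> (\<integral>x. u (T/2) x * \<eta> (T/2) x \<partial>lborel) - (\<integral>x. u0 x * \<eta> 0 x \<partial>lborel)
              = set_lebesgue_integral (lborel \<Otimes>\<^sub>M lborel) ({0..T/2} \<times> UNIV) G"
      using ws3 unfolding Let_def G_def .
    have eta_half: "\<eta> (T/2) x = 0" for x unfolding \<eta>_def using T k by simp
    have eta0: "\<eta> 0 x = \<phi> (x /\<^sub>R sqrt T) powr l" for x
      using assms(6)[rule_format, of "x /\<^sub>R sqrt T"] unfolding \<eta>_def gpw_def by (simp add: max_def)
    have LHS: "set_lebesgue_integral lborel (ball 0 (sqrt T)) (\<lambda>x. u0 x * \<phi> (x /\<^sub>R sqrt T) powr l)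
        = (\<integral>x. u0 x * \<eta> 0 x \<partial>lborel)"
      unfolding set_lebesgue_integral_def
    proof (rule Bochner_Integration.integral_cong[OF refl])
      fix x :: 'a
      show "indicator (ball 0 (sqrt T)) x *\<^sub>R (u0 x * \<phi> (x /\<^sub>R sqrt T) powr l) = u0 x * \<eta> 0 x"
        using phi_out[of x] by (cases "norm x < sqrt T") (auto simp: indicator_def eta0)
    qed
    have I0: "(\<integral>x. u (T/2) x * \<eta> (T/2) x \<partial>lborel) = 0" by (simp add: eta_half)
    define A where "A = ({0..T/2} \<times> UNIV :: (real \<times> 'a) set)"
    define fz where "fz z = indicator A z * - G z" for z
    have fz_eq: "fz = (\<lambda>z. - (indicator A z *\<^sub>R G z))" unfolding fz_def by auto
    have fint: "integrable (lborel \<Otimes>\<^sub>M lborel) fz"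
      unfolding fz_eq using W by (intro integrable_minus) (simp add: set_integrable_def A_def)
    have SI: "(\<integral>x. u0 x * \<eta> 0 x \<partial>lborel) = integral\<^sup>L (lborel \<Otimes>\<^sub>M lborel) fz"
    proof -
      have "integral\<^sup>L (lborel \<Otimes>\<^sub>M lborel) fz = - set_lebesgue_integral (lborel \<Otimes>\<^sub>M lborel) A G"
        unfolding fz_eq set_lebesgue_integral_def by (rule Bochner_Integration.integral_minus)
      then show ?thesis using W I0 unfolding A_def by linarith
    qed
    define hr where "hr x = indicator (cball 0 (sqrt T)) x * (K1 * T powr (- a') * norm x powr (- q) + K2 * norm x powr (- p))" for x :: 'a
    define Hb where "Hb z = ennreal (indicator {0..T/2} (fst z) * hr (snd z))" for z :: "real \<times> 'a"
    have hr0: "hr x \<ge> 0" for x unfolding hr_def using K1pos K2pos by auto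
    have ptw: "ennreal (fz (t, x)) \<le> Hb (t, x)" if x0: "x \<noteq> 0" for t x
    proof (cases "t \<in> {0..T/2}")
      case False
      then show ?thesis unfolding fz_def A_def by simp
    next
      case True
      have v: "u t x \<ge> 0" using upos[of t x] True T by auto
      define y where "y = x /\<^sub>R sqrt T"
      define \<sigma> where "\<sigma> = 1 - 2 * t / T"
      define \<Phi> where "\<Phi> = \<phi> y"
      define N1 where "N1 = (\<Sum>b\<in>Basis. Dfun \<phi> b y * Dfun \<phi> b y)"
      define N2 where "N2 = (\<Sum>b\<in>Basis. Dfun (Dfun \<phi> b) b y)"
      have \<sigma>: "0 \<le> \<sigma>" "\<sigma> \<le> 1" using True T unfolding \<sigma>_def by (auto simp: field_simps)
      have \<Phi>: "0 \<le> \<Phi>" "\<Phi> \<le> 1" using assms(6) unfolding \<Phi>_def by auto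
      have lap: "laplacian_of (Dxx t x) = \<sigma> ^ k / T * (gpw (l * (l - 1)) (l - 2) \<Phi> * N1 + gpw l (l - 1) \<Phi> * N2)"
        unfolding laplacian_of_def Dxx_def \<sigma>_def \<Phi>_def N1_def N2_def y_def by (rule sum_lap)
      have Gform: "G (t, x) = u t x * (\<eta>t t x + laplacian_of (Dxx t x) - a * norm x powr (-2) * \<eta> t x)
          + norm x powr \<gamma> * u t x powr \<alpha> * \<eta> t x"
        using assms(4) v by (simp add: G_def)
      have fzt: "fz (t, x) = - G (t, x)" using True unfolding fz_def A_def by simp
      consider "\<sigma> = 0 \<or> \<Phi> = 0" | "\<sigma> > 0" "\<Phi> > 0" using \<sigma> \<Phi> by linarith
      then show ?thesis
      proof cases
        case 1
        have "\<eta> t x = 0" "\<eta>t t x = 0" "laplacian_of (Dxx t x) = 0"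
          using 1 k l2 unfolding lap unfolding \<eta>_def \<eta>t_def \<sigma>_def[symmetric] y_def[symmetric] \<Phi>_def[symmetric]
          by (auto simp: gpw0)
        then have "G (t, x) = 0" unfolding Gform by simp
        then show ?thesis using fzt by simp
      next
        case 2
        have gp: "gpw 1 l \<Phi> = \<Phi> powr l" "gpw l (l - 1) \<Phi> = l * \<Phi> powr (l - 1)"
          "gpw (l * (l - 1)) (l - 2) \<Phi> = l * (l - 1) * \<Phi> powr (l - 2)"
          using 2 by (auto simp: gpw_def max_def)
        have ny: "norm y < 1" using 2 phi_supp unfolding \<Phi>_def by auto
        then have yc: "y \<in> cball 0 1" by simp
        have xc: "x \<in> cball 0 (sqrt T)"
        proof -
          have "inverse (sqrt T) * norm x < 1" using ny T unfolding y_def by simp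
          then have "norm x < sqrt T" using lt_aux[of "sqrt T" "norm x"] T by simp
          then show ?thesis by simp
        qed
        have N: "0 \<le> N1" "N1 \<le> M1" "\<bar>N2\<bar> \<le> M2"
        proof -
          have a1: "\<bar>N1\<bar> \<le> M1" "\<bar>N2\<bar> \<le> M2" using M1 M2 yc unfolding N1_def N2_def by auto
          have "0 \<le> N1" unfolding N1_def by (intro sum_nonneg) auto
          then show "0 \<le> N1" "N1 \<le> M1" "\<bar>N2\<bar> \<le> M2" using a1 by auto
        qed
        have r: "norm x > 0" using x0 by simp
        have key: "- (u t x * ((- (2 * real k / T) * \<sigma> ^ (k - 1) * \<Phi> powr l)
              + \<sigma> ^ k / T * (l * (l - 1) * \<Phi> powr (l - 2) * N1 + l * \<Phi> powr (l - 1) * N2)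
              - a * norm x powr (-2) * (\<sigma> ^ k * \<Phi> powr l))
          + norm x powr \<gamma> * u t x powr \<alpha> * (\<sigma> ^ k * \<Phi> powr l))
         \<le> 3 powr (1 / (\<alpha> - 1)) * ((((2 * real k) powr (\<alpha> / (\<alpha> - 1)) + (l * (l - 1) * M1 + l * M2) powr (\<alpha> / (\<alpha> - 1)))
           * T powr (- (\<alpha> / (\<alpha> - 1))) * norm x powr (- (\<gamma> / (\<alpha> - 1))))
         + \<bar>a\<bar> powr (\<alpha> / (\<alpha> - 1)) * norm x powr (- (2 * (\<alpha> / (\<alpha> - 1)) + \<gamma> / (\<alpha> - 1))))"
          using k(2) unfolding a'_def
          by (intro key_pt[OF \<alpha> T 2(1) \<sigma>(2) 2(2) \<Phi>(2) r v k(1) _ l2 N]) auto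
        have "G (t, x) = u t x * ((- (2 * real k / T) * \<sigma> ^ (k - 1) * \<Phi> powr l)
              + \<sigma> ^ k / T * (l * (l - 1) * \<Phi> powr (l - 2) * N1 + l * \<Phi> powr (l - 1) * N2)
              - a * norm x powr (-2) * (\<sigma> ^ k * \<Phi> powr l))
          + norm x powr \<gamma> * u t x powr \<alpha> * (\<sigma> ^ k * \<Phi> powr l)"
          unfolding Gform lap gp[symmetric]
          unfolding \<eta>_def \<eta>t_def \<sigma>_def[symmetric] y_def[symmetric] \<Phi>_def[symmetric] by simp
        moreover have "3 powr (1 / (\<alpha> - 1)) * ((((2 * real k) powr (\<alpha> / (\<alpha> - 1)) + (l * (l - 1) * M1 + l * M2) powr (\<alpha> / (\<alpha> - 1)))
           * T powr (- (\<alpha> / (\<alpha> - 1))) * norm x powr (- (\<gamma> / (\<alpha> - 1))))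
         + \<bar>a\<bar> powr (\<alpha> / (\<alpha> - 1)) * norm x powr (- (2 * (\<alpha> / (\<alpha> - 1)) + \<gamma> / (\<alpha> - 1)))) = hr x"
          unfolding hr_def K1_def K2_def c3_def a'_def q_def p_def using xc by (simp add: algebra_simps)
        ultimately have "fz (t, x) \<le> hr x" using key fzt by simp
        then show ?thesis unfolding Hb_def using True by (auto intro: ennreal_leI)
      qed
    qed
    have AE: "AE z in lborel \<Otimes>\<^sub>M lborel. ennreal (fz z) \<le> Hb z"
    proof (rule AE_I'[of "UNIV \<times> {0}"])
      show "UNIV \<times> {0} \<in> null_sets (lborel \<Otimes>\<^sub>M (lborel :: 'a measure))"
        by (rule lborel.times_in_null_sets2) (auto intro: finite_imp_null_set_lborel)
      show "{z \<in> space (lborel \<Otimes>\<^sub>M lborel). \<not> ennreal (fz z) \<le> Hb z} \<subseteq> UNIV \<times> {0}"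
      proof
        fix z :: "real \<times> 'a"
        assume z: "z \<in> {z \<in> space (lborel \<Otimes>\<^sub>M lborel). \<not> ennreal (fz z) \<le> Hb z}"
        obtain t x where tx: "z = (t, x)" by (cases z)
        show "z \<in> UNIV \<times> {0}"
        proof (cases "x = 0")
          case False
          then show ?thesis using ptw[OF False, of t] z tx by auto
        qed (use tx in auto)
      qed
    qed
    define h where "h x = ennreal (K1 * T powr (- a')) * (indicator (cball 0 (sqrt T)) x * ennreal (norm x powr (- q)))
        + ennreal K2 * (indicator (cball 0 (sqrt T)) x * ennreal (norm x powr (- p)))" for x :: 'a
    have eq1: "ennreal (K1 * T powr (- a') * norm x powr (- q) + K2 * norm x powr (- p))
        = ennreal (K1 * T powr (- a')) * ennreal (norm x powr (- q)) + ennreal K2 * ennreal (norm x powr (- p))" for x :: 'a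
    proof -
      have K1T: "K1 * T powr (- a') \<ge> 0" using K1pos by simp
      have n1: "K1 * T powr (- a') * norm x powr (- q) \<ge> 0" using K1T by simp
      have n2: "K2 * norm x powr (- p) \<ge> 0" using K2pos by simp
      show ?thesis
        unfolding ennreal_plus[OF n1 n2] ennreal_mult[OF K1T powr_ge_zero] ennreal_mult[OF K2pos powr_ge_zero] ..
    qed
    have Hb_eq: "Hb z = indicator {0..T/2} (fst z) * h (snd z)" for z
    proof (cases "fst z \<in> {0..T/2}")
      case False
      then show ?thesis unfolding Hb_def by simp
    next
      case True
      show ?thesis
      proof (cases "snd z \<in> cball 0 (sqrt T)")
        case False
        then show ?thesis unfolding Hb_def hr_def h_def using True by simp
      next
        case True2: True
        have "Hb z = ennreal (K1 * T powr (- a') * norm (snd z) powr (- q) + K2 * norm (snd z) powr (- p))"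
          unfolding Hb_def hr_def using True True2 by (simp only: indicator_simps mult_1_left)
        also have "\<dots> = h (snd z)" unfolding eq1 h_def using True2 by (simp only: indicator_simps mult_1_left)
        finally show ?thesis using True by (simp only: indicator_simps mult_1_left)
      qed
    qed
    have hmeas: "h \<in> borel_measurable lborel" unfolding h_def by measurable
    have Hmeas: "(\<lambda>z::real \<times> 'a. indicator {0..T/2} (fst z) * h (snd z)) \<in> borel_measurable (lborel \<Otimes>\<^sub>M lborel)"
      using hmeas by measurable
    have "(\<integral>\<^sup>+z. Hb z \<partial>(lborel \<Otimes>\<^sub>M lborel)) = (\<integral>\<^sup>+t. \<integral>\<^sup>+x. indicator {0..T/2} t * h x \<partial>lborel \<partial>lborel)"
      unfolding Hb_eq using lborel.nn_integral_fst[OF Hmeas] by simp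
    also have "\<dots> = (\<integral>\<^sup>+t. (\<integral>\<^sup>+x. h x \<partial>lborel) * indicator {0..T/2} t \<partial>lborel)"
      using hmeas by (subst nn_integral_cmult) (auto simp: mult.commute)
    also have "\<dots> = (\<integral>\<^sup>+x. h x \<partial>lborel) * ennreal (T / 2)"
      using T by (subst nn_integral_cmult_indicator) auto
    finally have HbI: "(\<integral>\<^sup>+z. Hb z \<partial>(lborel \<Otimes>\<^sub>M lborel)) = (\<integral>\<^sup>+x. h x \<partial>lborel) * ennreal (T / 2)" .
    have hI: "(\<integral>\<^sup>+x. h x \<partial>lborel) = ennreal (K1 * T powr (- a')) * Jp q (sqrt T) TYPE('a) + ennreal K2 * Jp p (sqrt T) TYPE('a)"
      unfolding h_def Jp_def by (subst nn_integral_add) (auto simp: nn_integral_cmult)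
    have sT: "sqrt T > 0" using T by simp
    have Jq_eq: "Jp q (sqrt T) TYPE('a) = ennreal (sqrt T powr (d - q) * Jq)"
    proof -
      have "Jp q 1 TYPE('a) < \<infinity>" using Jp_finite[of q, where 'a='a] hq unfolding d_def by simp
      then have "Jp q 1 TYPE('a) = ennreal Jq" unfolding Jq_def by simp
      then show ?thesis using Jp_scale[OF sT, of q, where 'a='a] unfolding d_def by (simp add: ennreal_mult Jpos)
    qed
    have Jp_eq: "ennreal K2 * Jp p (sqrt T) TYPE('a) = ennreal (K2 * (sqrt T powr (d - p) * Jpp))"
    proof (cases "a = 0")
      case True
      then have "K2 = 0" unfolding K2_def using a'1 by simp
      then show ?thesis by simp
    next
      case False
      have "Jp p 1 TYPE('a) < \<infinity>" using Jp_finite[of p, where 'a='a] hp[OF False] unfolding d_def by simp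
      then have "Jp p 1 TYPE('a) = ennreal Jpp" unfolding Jpp_def by simp
      then show ?thesis using Jp_scale[OF sT, of p, where 'a='a] K2pos Jpos unfolding d_def
        by (simp add: ennreal_mult mult.assoc)
    qed
    define e where "e = - (2 + \<gamma>) / (2 * (\<alpha> - 1)) + real DIM('a) / 2"
    have spow: "sqrt T powr z = T powr (z / 2)" for z
    proof -
      have "sqrt T = T powr (1/2)" using T by (simp add: powr_half_sqrt)
      then have "sqrt T powr z = T powr (1/2 * z)" by (simp only: powr_powr)
      then show ?thesis by simp
    qed
    have e1: "T * (T powr (- a') * sqrt T powr (d - q)) = T powr e"
    proof -
      have "T * (T powr (- a') * sqrt T powr (d - q)) = T powr 1 * (T powr (- a') * T powr ((d - q) / 2))"
        using T by (simp add: spow)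
      also have "\<dots> = T powr (1 + (- a' + (d - q) / 2))" by (simp only: powr_add)
      also have "1 + (- a' + (d - q) / 2) = e"
        unfolding e_def a'_def q_def d_def using am by (simp add: divide_simps; simp add: algebra_simps)
      finally show ?thesis .
    qed
    have e2: "T * sqrt T powr (d - p) = T powr e"
    proof -
      have "T * sqrt T powr (d - p) = T powr 1 * T powr ((d - p) / 2)"
        using T by (simp add: spow)
      also have "\<dots> = T powr (1 + (d - p) / 2)" by (simp only: powr_add)
      also have "1 + (d - p) / 2 = e"
        unfolding e_def p_def a'_def q_def d_def using am by (simp add: divide_simps; simp add: algebra_simps)
      finally show ?thesis .
    qed
    have tot: "(\<integral>\<^sup>+z. Hb z \<partial>(lborel \<Otimes>\<^sub>M lborel)) = ennreal (C * T powr e)"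
    proof -
      have "(\<integral>\<^sup>+z. Hb z \<partial>(lborel \<Otimes>\<^sub>M lborel))
          = ennreal ((K1 * T powr (- a') * (sqrt T powr (d - q) * Jq) + K2 * (sqrt T powr (d - p) * Jpp)) * (T / 2))"
      proof -
        define X1 where "X1 = K1 * T powr (- a')"
        define X2 where "X2 = sqrt T powr (d - q) * Jq"
        define Y where "Y = K2 * (sqrt T powr (d - p) * Jpp)"
        have X1: "X1 \<ge> 0" unfolding X1_def using K1pos by simp
        have X2: "X2 \<ge> 0" unfolding X2_def using Jpos by simp
        have Y: "Y \<ge> 0" unfolding Y_def using K2pos Jpos by simp
        have XY: "X1 * X2 \<ge> 0" using X1 X2 by simp
        have T2: "T / 2 \<ge> 0" using T by simp
        have "(\<integral>\<^sup>+z. Hb z \<partial>(lborel \<Otimes>\<^sub>M lborel)) = (ennreal X1 * ennreal X2 + ennreal Y) * ennreal (T / 2)"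
          unfolding HbI hI Jq_eq Jp_eq X1_def X2_def Y_def ..
        also have "\<dots> = ennreal ((X1 * X2 + Y) * (T / 2))"
          unfolding ennreal_mult[OF X1 X2, symmetric] ennreal_plus[OF XY Y, symmetric]
            ennreal_mult[OF add_nonneg_nonneg[OF XY Y] T2, symmetric] ..
        finally show ?thesis unfolding X1_def X2_def Y_def .
      qed
      also have "(K1 * T powr (- a') * (sqrt T powr (d - q) * Jq) + K2 * (sqrt T powr (d - p) * Jpp)) * (T / 2)
          = (K1 * Jq * (T * (T powr (- a') * sqrt T powr (d - q))) + K2 * Jpp * (T * sqrt T powr (d - p))) / 2"
        by (simp add: algebra_simps)
      also have "\<dots> = C * T powr e" unfolding e1 e2 C_def by (simp add: algebra_simps)
      finally show ?thesis .
    qed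
    have CT: "C * T powr e \<ge> 0" using Cpos by simp
    have "set_lebesgue_integral lborel (ball 0 (sqrt T)) (\<lambda>x. u0 x * \<phi> (x /\<^sub>R sqrt T) powr l)
        = integral\<^sup>L (lborel \<Otimes>\<^sub>M lborel) fz" using LHS SI by simp
    also have "\<dots> \<le> enn2real (\<integral>\<^sup>+z. ennreal (fz z) \<partial>(lborel \<Otimes>\<^sub>M lborel))"
      by (rule integral_le_nn[OF fint])
    also have "\<dots> \<le> enn2real (\<integral>\<^sup>+z. Hb z \<partial>(lborel \<Otimes>\<^sub>M lborel))"
      by (rule enn2real_mono[OF nn_integral_mono_AE[OF AE]]) (simp add: tot)
    also have "\<dots> = C * T powr e" using CT by (simp add: tot)
    finally show "set_lebesgue_integral lborel (ball 0 (sqrt T)) (\<lambda>x. u0 x * \<phi> (x /\<^sub>R sqrt T) powr l)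
            \<le> C * T powr (- (2 + \<gamma>) / (2 * (\<alpha> - 1)) + real DIM('a) / 2)"
      unfolding e_def .
  qed
qed


end
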